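(* Let $N\ge 2$, let $O_N$ be a Haar distributed random matrix on the orthogonal group $O(N)$, let $n$ be even, and let $M_1,\dots,M_n\in M_N(\mathbb{C})$ be deterministic. Put $X_i=O_NM_iO_N^t$ for $i$ odd and $X_i=M_i$ for $i$ even. Then \begin{align*} (N-1)\,\mathbb{E}\big[\mathrm{Tr}(X_1X_2\cdots X_n)\big] =&-\sum_{\substack{1\le k\le n-1\\ k\text{ odd}}}\mathbb{E}\big[\mathrm{Tr}\big(X_1\cdots X_k\,(X_{k+1}\cdots X_n)^t\big)\big]\\ &+\sum_{\substack{1\le k\le n-1\\ k\text{ odd}}}\mathbb{E}\big[\mathrm{Tr}(X_1\cdots X_k)\,\mathrm{Tr}(X_{k+1}\cdots X_n)\big]\\ &+\sum_{\substack{3\le k\le n-1\\ k\text{ odd}}}\mathbb{E}\big[\mathrm{Tr}\big(X_1\cdots X_{k-1}\,(X_k\cdots X_n)^t\big)\big]\\ &-\sum_{\substack{3\le k\le n-1\\ k\text{ odd}}}\mathbb{E}\big[\mathrm{Tr}(X_1\cdots X_{k-1})\,\mathrm{Tr}(X_k\cdots X_n)\big]. \end{align*}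
   Context: $\mathrm{Tr}$ denotes the (unnormalized) trace on $M_N(\mathbb{C})$ and $A^t$ the transpose of a matrix $A$. *)

theory Defs
  imports "HOL-Analysis.Analysis" "HOL-Probability.Probability"
begin

text \<open>Haar probability measure on the orthogonal group O(N), with N = CARD('n):
  a Borel probability measure on real N x N matrices, concentrated on O(N), and
  invariant under left multiplication by every orthogonal matrix
  (on a compact group this characterises the Haar measure uniquely).\<close>
definition haar_orthogonal :: "(real^'n^'n) measure \<Rightarrow> bool" where
  "haar_orthogonal \<mu> \<longleftrightarrow>
     prob_space \<mu> \<and> sets \<mu> = sets borel \<and>
     (AE Q in \<mu>. orthogonal_matrix Q) \<and>
     (\<forall>U. orthogonal_matrix U \<longrightarrow> distr \<mu> borel (\<lambda>Q. U ** Q) = \<mu>)"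

definition cmat :: "real^'n^'n \<Rightarrow> complex^'n^'n" where
  "cmat Q = (\<chi> i j. complex_of_real (Q $ i $ j))"

text \<open>Ordered matrix product X a X (a+1) ... X b (identity if b < a).\<close>
definition mprod :: "(nat \<Rightarrow> complex^'n^'n) \<Rightarrow> nat \<Rightarrow> nat \<Rightarrow> complex^'n^'n" where
  "mprod X a b = foldr (\<lambda>i acc. X i ** acc) [a..<Suc b] (mat 1)"

definition Xmat :: "real^'n^'n \<Rightarrow> (nat \<Rightarrow> complex^'n^'n) \<Rightarrow> nat \<Rightarrow> complex^'n^'n" where
  "Xmat Q M i = (if odd i then cmat Q ** M i ** transpose (cmat Q) else M i)"

end

theory Submission
  imports Defs
begin


lemma matrix_add_rdistrib: "((B + C) ** (A::'a::semiring_1^_^_)) = (B ** A) + (C ** A)"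
  by (vector matrix_matrix_mult_def sum.distrib[symmetric] field_simps)
lemma matrix_diff_ldistrib: "((A::'a::ring_1^_^_) ** (B - C)) = (A ** B) - (A ** C)"
  by (vector matrix_matrix_mult_def sum_subtractf[symmetric] field_simps)
lemma matrix_diff_rdistrib: "((B - C) ** (A::'a::ring_1^_^_)) = (B ** A) - (C ** A)"
  by (vector matrix_matrix_mult_def sum_subtractf[symmetric] field_simps)
lemma matrix_neg_left: "((- B) ** (A::'a::ring_1^_^_)) = - (B ** A)"
  by (vector matrix_matrix_mult_def sum_negf[symmetric])
lemma matrix_neg_right: "((A::'a::ring_1^_^_) ** (- B)) = - (A ** B)"
  by (vector matrix_matrix_mult_def sum_negf[symmetric])
lemma transpose_add: "transpose (A + B) = transpose A + transpose B"
  by (vector transpose_def)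
lemma transpose_diff: "transpose (A - B) = transpose A - (transpose B :: 'a::ab_group_add^_^_)"
  by (vector transpose_def)
lemma transpose_neg: "transpose (- A) = - (transpose A :: 'a::ab_group_add^_^_)"
  by (vector transpose_def)
lemma scaleR_cmat_nth: "(c *\<^sub>R (A::complex^'n^'m)) $ i $ j = complex_of_real c * A $ i $ j"
  by (simp only: vector_scaleR_component) (simp add: scaleR_conv_of_real)
lemma trace_scaleR: "trace (c *\<^sub>R (A::complex^'n^'n)) = complex_of_real c * trace A"
  unfolding trace_def scaleR_cmat_nth by (simp add: sum_distrib_left)
lemma matrix_sum_ldistrib: "(A::'a::semiring_1^_^_) ** sum f S = (\<Sum>i\<in>S. A ** f i)"
  by (induction S rule: infinite_finite_induct) (auto simp: matrix_add_ldistrib)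
lemma matrix_sum_rdistrib: "sum f S ** (A::'a::semiring_1^_^_) = (\<Sum>i\<in>S. f i ** A)"
  by (induction S rule: infinite_finite_induct) (auto simp: matrix_add_rdistrib)
lemma trace_neg: "trace (- (A::'a::comm_ring_1^'n^'n)) = - trace A"
  by (simp add: trace_def sum_negf)
lemma trace_sum: "trace (sum (f::_\<Rightarrow>'a::comm_ring_1^'n^'n) S) = (\<Sum>i\<in>S. trace (f i))"
  by (induction S rule: infinite_finite_induct) (auto simp: trace_add trace_0[simplified])
lemma trace_transpose: "trace (transpose A) = trace (A::'a::semiring_1^'n^'n)"
  by (simp add: trace_def transpose_def)

lemma cmat_mult: "cmat (A ** B) = cmat A ** cmat B"
  by (simp add: cmat_def matrix_matrix_mult_def vec_eq_iff)
lemma cmat_add: "cmat (A + B) = cmat A + cmat B"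
  by (simp add: cmat_def vec_eq_iff)
lemma cmat_diff: "cmat (A - B) = cmat A - cmat B"
  by (simp add: cmat_def vec_eq_iff)
lemma cmat_scaleR: "cmat (c *\<^sub>R A) = c *\<^sub>R cmat A"
  unfolding vec_eq_iff scaleR_cmat_nth by (simp add: cmat_def)
lemma cmat_one: "cmat (mat 1) = mat 1"
  by (simp add: cmat_def vec_eq_iff mat_def)
lemma cmat_transpose: "cmat (transpose A) = transpose (cmat A)"
  by (simp add: cmat_def vec_eq_iff transpose_def)

lemma continuous_on_matrix_mult[continuous_intros]:
  fixes f :: "_ \<Rightarrow> 'a::{real_normed_algebra,semiring_1}^'m^'n"
  assumes "continuous_on S f" "continuous_on S g"
  shows "continuous_on S (\<lambda>x. f x ** g x)"
  unfolding matrix_matrix_mult_def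
  by (intro continuous_intros assms)

lemma continuous_on_transpose[continuous_intros]:
  assumes "continuous_on S f"
  shows "continuous_on S (\<lambda>x. transpose (f x))"
  unfolding transpose_def by (intro continuous_intros assms)

lemma continuous_on_cmat[continuous_intros]:
  assumes "continuous_on S f"
  shows "continuous_on S (\<lambda>x. cmat (f x))"
  unfolding cmat_def by (intro continuous_intros assms)

lemma continuous_on_trace[continuous_intros]:
  fixes f :: "_ \<Rightarrow> 'a::{real_normed_algebra,semiring_1}^'n^'n"
  assumes "continuous_on S f"
  shows "continuous_on S (\<lambda>x. trace (f x))"
  unfolding trace_def by (intro continuous_intros assms)

definition lprod :: "(nat \<Rightarrow> 'a::semiring_1^'n^'n) \<Rightarrow> nat list \<Rightarrow> 'a^'n^'n" where
  "lprod X xs = foldr (\<lambda>i acc. X i ** acc) xs (mat 1)"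

lemma lprod_Nil[simp]: "lprod X [] = mat 1" by (simp add: lprod_def)
lemma lprod_Cons[simp]: "lprod X (x#xs) = X x ** lprod X xs" by (simp add: lprod_def)
lemma lprod_append: "lprod X (xs @ ys) = lprod X xs ** lprod X ys"
  by (induction xs) (auto simp: matrix_mul_assoc)
lemma mprod_lprod: "mprod X a b = lprod X [a..<Suc b]"
  by (simp add: mprod_def lprod_def)

lemma continuous_on_lprod[continuous_intros]:
  fixes f :: "_ \<Rightarrow> nat \<Rightarrow> 'a::{real_normed_algebra_1}^'n^'n"
  assumes "\<And>i. continuous_on S (\<lambda>x. f x i)"
  shows "continuous_on S (\<lambda>x. lprod (f x) xs)"
  by (induction xs) (auto intro!: continuous_intros assms)

lemma lprod_telescope:
  fixes X Y :: "nat \<Rightarrow> 'a::comm_ring_1^'n^'n"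
  shows "lprod X xs - lprod Y xs =
    (\<Sum>j<length xs. lprod X (take j xs) ** (X (xs!j) - Y (xs!j)) ** lprod Y (drop (Suc j) xs))"
proof (induction xs)
  case Nil then show ?case by simp
next
  case (Cons x xs)
  have "lprod X (x#xs) - lprod Y (x#xs) = (X x - Y x) ** lprod Y xs + X x ** (lprod X xs - lprod Y xs)"
    by (simp add: matrix_diff_ldistrib matrix_diff_rdistrib)
  also have "X x ** (lprod X xs - lprod Y xs) = (\<Sum>j<length xs. X x ** (lprod X (take j xs) ** (X (xs!j) - Y (xs!j)) ** lprod Y (drop (Suc j) xs)))"
    unfolding Cons.IH by (simp add: matrix_sum_ldistrib)
  finally show ?case
    by (simp add: sum.lessThan_Suc_shift matrix_mul_assoc del: sum.lessThan_Suc)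
qed



lemma norm_vec_le_sum: "norm (x::'a::real_normed_vector^'n) \<le> (\<Sum>i\<in>UNIV. norm (x$i))"
  unfolding norm_vec_def by (rule L2_set_le_sum) auto

lemma compact_orth: "compact {Q::real^'n^'n. orthogonal_matrix Q}"
proof -
  have cl: "closed {Q::real^'n^'n. orthogonal_matrix Q}"
    unfolding orthogonal_matrix_def Collect_conj_eq
    by (intro closed_Int closed_Collect_eq continuous_intros)
  have "\<forall>Q\<in>{Q::real^'n^'n. orthogonal_matrix Q}. norm Q \<le> real CARD('n)"
  proof
    fix Q :: "real^'n^'n" assume "Q \<in> {Q. orthogonal_matrix Q}"
    then have r: "\<And>i. norm (row i Q) = 1" using orthogonal_matrix_orthonormal_rows by auto
    have "\<And>i. row i Q = Q $ i" by (simp add: row_def vec_eq_iff)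
    with r have "\<And>i. norm (Q$i) = 1" by metis
    then show "norm Q \<le> real CARD('n)" using norm_vec_le_sum[of Q] by simp
  qed
  then have "bounded {Q::real^'n^'n. orthogonal_matrix Q}" unfolding bounded_iff by blast
  with cl show ?thesis using compact_eq_bounded_closed by blast
qed

lemma haar_prob: "haar_orthogonal \<mu> \<Longrightarrow> prob_space \<mu>"
  unfolding haar_orthogonal_def by (elim conjE) assumption
lemma haar_sets: "haar_orthogonal \<mu> \<Longrightarrow> sets \<mu> = sets borel"
  unfolding haar_orthogonal_def by (elim conjE) assumption
lemma haar_ae: "haar_orthogonal \<mu> \<Longrightarrow> AE Q in \<mu>. orthogonal_matrix Q"
  unfolding haar_orthogonal_def by (elim conjE) assumption
lemma haar_distr: "haar_orthogonal \<mu> \<Longrightarrow> orthogonal_matrix U \<Longrightarrow> distr \<mu> borel (\<lambda>Q. U ** Q) = \<mu>"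
  unfolding haar_orthogonal_def by (elim conjE allE) (erule mp)

lemma haar_meas:
  assumes "haar_orthogonal \<mu>" "continuous_on UNIV f"
  shows "f \<in> borel_measurable \<mu>"
proof -
  have "sets \<mu> = sets borel" using assms(1) by (rule haar_sets)
  then show ?thesis
    by (subst measurable_cong_sets[OF _ refl]) (auto intro: borel_measurable_continuous_onI[OF assms(2)])
qed

lemma cont_integrable:
  fixes f :: "real^'n^'n \<Rightarrow> 'b::{banach,second_countable_topology}"
  assumes haar: "haar_orthogonal \<mu>" and c: "continuous_on UNIV f"
  shows "integrable \<mu> f"
proof -
  interpret prob_space \<mu> using haar by (rule haar_prob)
  have "compact (f ` {Q. orthogonal_matrix Q})"
    by (rule compact_continuous_image[OF continuous_on_subset[OF c] compact_orth]) auto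
  then have "bounded (f ` {Q. orthogonal_matrix Q})" by (rule compact_imp_bounded)
  then obtain B where B0: "\<forall>x\<in>f ` {Q. orthogonal_matrix Q}. norm x \<le> B"
    unfolding bounded_pos by metis
  have B: "\<And>Q. orthogonal_matrix Q \<Longrightarrow> norm (f Q) \<le> B" using B0 by simp
  have ae: "AE Q in \<mu>. orthogonal_matrix Q" using haar by (rule haar_ae)
  have "AE Q in \<mu>. norm (f Q) \<le> B" using ae by eventually_elim (rule B)
  then show ?thesis by (rule integrable_const_bound) (rule haar_meas[OF haar c])
qed

lemma haar_invariant:
  fixes f :: "real^'n^'n \<Rightarrow> 'b::{banach,second_countable_topology}"
  assumes haar: "haar_orthogonal \<mu>" and c: "continuous_on UNIV f" and U: "orthogonal_matrix U"
  shows "(\<integral>Q. f (U ** Q) \<partial>\<mu>) = (\<integral>Q. f Q \<partial>\<mu>)"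
proof -
  have d: "distr \<mu> borel (\<lambda>Q. U ** Q) = \<mu>" using haar U by (rule haar_distr)
  have m: "(\<lambda>Q. U ** Q) \<in> measurable \<mu> borel"
    by (rule haar_meas[OF haar]) (intro continuous_intros)
  have "(\<integral>Q. f Q \<partial>\<mu>) = (\<integral>Q. f Q \<partial>(distr \<mu> borel (\<lambda>Q. U ** Q)))" by (simp only: d)
  also have "\<dots> = (\<integral>Q. f (U ** Q) \<partial>\<mu>)"
    by (rule integral_distr[OF m borel_measurable_continuous_onI[OF c]])
  finally show ?thesis by simp
qed

lemma key:
  fixes \<Phi> :: "real^'n^'n \<Rightarrow> complex" and H :: "real \<Rightarrow> real^'n^'n \<Rightarrow> complex"
    and U :: "real \<Rightarrow> real^'n^'n"
  assumes haar: "haar_orthogonal \<mu>"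
    and orth: "\<And>t. orthogonal_matrix (U t)"
    and \<Phi>c: "continuous_on UNIV \<Phi>"
    and Hc: "continuous_on UNIV (\<lambda>p. H (fst p) (snd p))"
    and eq: "\<And>t Q. \<Phi> (U t ** Q) - \<Phi> Q = t *\<^sub>R H t Q"
  shows "(\<integral>Q. H 0 Q \<partial>\<mu>) = 0"
proof -
  interpret prob_space \<mu> using haar by (rule haar_prob)
  have Hc1: "continuous_on UNIV (H t)" for t
  proof -
    have "continuous_on UNIV ((\<lambda>p. H (fst p) (snd p)) \<circ> (\<lambda>Q. (t, Q)))"
      by (intro continuous_on_compose continuous_intros continuous_on_subset[OF Hc]) auto
    then show ?thesis by (simp add: o_def)
  qed
  have Hc2: "isCont (\<lambda>t. H t Q) t" for Q t
  proof -
    have "continuous_on UNIV ((\<lambda>p. H (fst p) (snd p)) \<circ> (\<lambda>t. (t, Q)))"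
      by (intro continuous_on_compose continuous_intros continuous_on_subset[OF Hc]) auto
    then have "continuous_on UNIV (\<lambda>t. H t Q)" by (simp add: o_def)
    then show ?thesis using continuous_on_eq_continuous_at[of UNIV] by blast
  qed
  have \<Phi>Uc: "continuous_on UNIV (\<lambda>Q. \<Phi> (U t ** Q))" for t
    by (intro continuous_on_compose2[OF \<Phi>c] continuous_intros) auto
  have zero: "(\<integral>Q. H t Q \<partial>\<mu>) = 0" if "t \<noteq> 0" for t
  proof -
    have "\<And>Q. H t Q = (1/t) *\<^sub>R (\<Phi> (U t ** Q) - \<Phi> Q)" using eq that by simp
    then have "(\<integral>Q. H t Q \<partial>\<mu>) = (\<integral>Q. (1/t) *\<^sub>R (\<Phi> (U t ** Q) - \<Phi> Q) \<partial>\<mu>)" by simp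
    also have "\<dots> = (1/t) *\<^sub>R ((\<integral>Q. \<Phi> (U t ** Q) \<partial>\<mu>) - (\<integral>Q. \<Phi> Q \<partial>\<mu>))"
      using cont_integrable[OF haar \<Phi>c] cont_integrable[OF haar \<Phi>Uc] by simp
    also have "\<dots> = 0" using haar_invariant[OF haar \<Phi>c orth] by simp
    finally show ?thesis .
  qed
  let ?K = "{0..1::real} \<times> {Q::real^'n^'n. orthogonal_matrix Q}"
  have "compact ((\<lambda>p. H (fst p) (snd p)) ` ?K)"
    by (rule compact_continuous_image[OF continuous_on_subset[OF Hc]])
       (auto intro: compact_Times compact_orth)
  then have "bounded ((\<lambda>p. H (fst p) (snd p)) ` ?K)" by (rule compact_imp_bounded)
  then obtain B where B0: "\<forall>x\<in>(\<lambda>p. H (fst p) (snd p)) ` ?K. norm x \<le> B"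
    unfolding bounded_pos by metis
  have B: "\<And>p. p \<in> ?K \<Longrightarrow> norm (H (fst p) (snd p)) \<le> B" using B0 by blast
  have ae: "AE Q in \<mu>. orthogonal_matrix Q" using haar by (rule haar_ae)
  let ?s = "\<lambda>i. H (inverse (real (Suc i)))"
  have lim: "(\<lambda>i. integral\<^sup>L \<mu> (?s i)) \<longlonglongrightarrow> integral\<^sup>L \<mu> (H 0)"
  proof (rule integral_dominated_convergence[where w="\<lambda>_. B"])
    show "H 0 \<in> borel_measurable \<mu>" by (rule haar_meas[OF haar Hc1])
    show "?s i \<in> borel_measurable \<mu>" for i by (rule haar_meas[OF haar Hc1])
    show "integrable \<mu> (\<lambda>_. B)" by simp
    show "AE x in \<mu>. (\<lambda>i. ?s i x) \<longlonglongrightarrow> H 0 x"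
      by (intro AE_I2 isCont_tendsto_compose[OF Hc2] LIMSEQ_inverse_real_of_nat)
    show "AE x in \<mu>. norm (?s i x) \<le> B" for i
      using ae
    proof eventually_elim
      case (elim x)
      have "inverse (real (Suc i)) \<in> {0..1}" by (auto simp: field_simps)
      with elim show ?case using B[of "(inverse (real (Suc i)), x)"] by auto
    qed
  qed
  moreover have "(\<lambda>i. integral\<^sup>L \<mu> (?s i)) = (\<lambda>i. 0)" by (intro ext zero) simp
  ultimately show ?thesis using LIMSEQ_unique tendsto_const by metis
qed



lemma onept_nz[simp]: "1 + t\<^sup>2 \<noteq> (0::real)"
  using zero_le_power2[of t] by linarith

definition Ucurve :: "real^'n^'n \<Rightarrow> real \<Rightarrow> real^'n^'n" where
  "Ucurve A t = mat 1 + (2*t/(1+t\<^sup>2)) *\<^sub>R A + (2*t\<^sup>2/(1+t\<^sup>2)) *\<^sub>R (A**A)"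
definition Ccurve :: "real^'n^'n \<Rightarrow> real \<Rightarrow> complex^'n^'n" where
  "Ccurve A t = cmat ((2/(1+t\<^sup>2)) *\<^sub>R A + (2*t/(1+t\<^sup>2)) *\<^sub>R (A**A))"
definition Kmat :: "real^'n^'n \<Rightarrow> real \<Rightarrow> real^'n^'n \<Rightarrow> (nat \<Rightarrow> complex^'n^'n) \<Rightarrow> nat \<Rightarrow> complex^'n^'n" where
  "Kmat A t Q M i = (if odd i then Ccurve A t ** Xmat Q M i + Xmat Q M i ** transpose (Ccurve A t)
     + t *\<^sub>R (Ccurve A t ** Xmat Q M i ** transpose (Ccurve A t)) else 0)"

lemma cmat_Ucurve: "cmat (Ucurve A t) = mat 1 + t *\<^sub>R Ccurve A t"
proof -
  have "Ucurve A t = mat 1 + t *\<^sub>R ((2/(1+t\<^sup>2)) *\<^sub>R A + (2*t/(1+t\<^sup>2)) *\<^sub>R (A**A))"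
    unfolding Ucurve_def by (simp add: scaleR_add_right power2_eq_square mult_ac)
  then show ?thesis unfolding Ccurve_def by (simp add: cmat_add cmat_scaleR cmat_one)
qed

lemma orth_expand:
  fixes A :: "real^'n^'n"
  assumes A3: "A ** (A ** A) = - A"
  shows "(mat 1 - p *\<^sub>R A + q *\<^sub>R (A**A)) ** (mat 1 + p *\<^sub>R A + q *\<^sub>R (A**A))
        = mat 1 + (2*q - p*p - q*q) *\<^sub>R (A**A)"
proof -
  have AAA: "(A ** A) ** A = - A" using A3 by (simp add: matrix_mul_assoc)
  have A4: "(A ** A) ** (A ** A) = - (A ** A)"
    by (metis A3 matrix_mul_assoc matrix_neg_right)
  show ?thesis
    by (simp add: matrix_add_ldistrib matrix_add_rdistrib matrix_diff_ldistrib matrix_diff_rdistrib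
        matrix_scalar_ac scalar_matrix_assoc[symmetric] A3 AAA A4 matrix_neg_left matrix_neg_right)
       (simp add: vec_eq_iff algebra_simps)
qed

lemma orth_Ucurve:
  fixes A :: "real^'n^'n"
  assumes At: "transpose A = - A" and A3: "A ** (A ** A) = - A"
  shows "orthogonal_matrix (Ucurve A t)"
proof -
  let ?s = "2*t/(1+t\<^sup>2)" and ?u = "2*t\<^sup>2/(1+t\<^sup>2)"
  have tAA: "transpose (A ** A) = A ** A"
    by (simp add: matrix_transpose_mul At matrix_neg_left matrix_neg_right)
  have tU: "transpose (Ucurve A t) = mat 1 - ?s *\<^sub>R A + ?u *\<^sub>R (A**A)"
    unfolding Ucurve_def by (simp add: transpose_add transpose_scalar tAA At)
  have z: "2*?u - ?s*?s - ?u*?u = 0"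
  proof -
    have gen: "\<And>d x y::real. d \<noteq> 0 \<Longrightarrow> 2*(2*x/d) - (2*y/d)*(2*y/d) - (2*x/d)*(2*x/d) = (4*x*d - 4*y*y - 4*x*x)/(d*d)"
      by (simp add: field_simps)
    have "2*?u - ?s*?s - ?u*?u = (4*t\<^sup>2*(1+t\<^sup>2) - 4*t*t - 4*t\<^sup>2*t\<^sup>2)/((1+t\<^sup>2)*(1+t\<^sup>2))"
      by (rule gen) simp
    also have "\<dots> = 0" by (simp add: algebra_simps power2_eq_square)
    finally show ?thesis .
  qed
  show ?thesis unfolding orthogonal_matrix tU
    using orth_expand[OF A3, of ?s ?u] z by (simp add: Ucurve_def)
qed

lemma Xmat_diff:
  "Xmat (Ucurve A t ** Q) M i - Xmat Q M i = t *\<^sub>R Kmat A t Q M i"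
proof (cases "odd i")
  case True
  let ?C = "Ccurve A t" and ?Y = "Xmat Q M i"
  have Y: "?Y = cmat Q ** M i ** transpose (cmat Q)" using True by (simp add: Xmat_def)
  have "Xmat (Ucurve A t ** Q) M i = (mat 1 + t *\<^sub>R ?C) ** ?Y ** transpose (mat 1 + t *\<^sub>R ?C)"
    using True unfolding Y Xmat_def cmat_mult cmat_Ucurve[symmetric]
    by (simp add: matrix_transpose_mul matrix_mul_assoc)
  also have "\<dots> = ?Y + t *\<^sub>R (?C ** ?Y + ?Y ** transpose ?C + t *\<^sub>R (?C ** ?Y ** transpose ?C))"
    by (simp add: transpose_add transpose_scalar matrix_add_ldistrib matrix_add_rdistrib
        matrix_scalar_ac scalar_matrix_assoc[symmetric] scaleR_add_right)
  finally show ?thesis using True by (simp add: Kmat_def)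
next
  case False then show ?thesis by (simp add: Kmat_def Xmat_def)
qed



definition Hfun :: "real^'n^'n \<Rightarrow> complex^'n^'n \<Rightarrow> (nat \<Rightarrow> complex^'n^'n) \<Rightarrow> nat \<Rightarrow> real \<Rightarrow> real^'n^'n \<Rightarrow> complex" where
  "Hfun A E M n t Q = trace (E ** (\<Sum>j<n. lprod (Xmat (Ucurve A t ** Q) M) (take j [1..<Suc n])
      ** Kmat A t Q M ([1..<Suc n]!j) ** lprod (Xmat Q M) (drop (Suc j) [1..<Suc n])))"

lemma Hfun_eq:
  "trace (E ** mprod (Xmat (Ucurve A t ** Q) M) 1 n) - trace (E ** mprod (Xmat Q M) 1 n)
    = t *\<^sub>R Hfun A E M n t Q"
proof -
  have "trace (E ** mprod (Xmat (Ucurve A t ** Q) M) 1 n) - trace (E ** mprod (Xmat Q M) 1 n)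
    = trace (E ** (lprod (Xmat (Ucurve A t ** Q) M) [1..<Suc n] - lprod (Xmat Q M) [1..<Suc n]))"
    by (simp only: mprod_lprod trace_sub matrix_diff_ldistrib)
  also have "\<dots> = trace (E ** (\<Sum>j<n. t *\<^sub>R (lprod (Xmat (Ucurve A t ** Q) M) (take j [1..<Suc n])
      ** Kmat A t Q M ([1..<Suc n]!j) ** lprod (Xmat Q M) (drop (Suc j) [1..<Suc n]))))"
    unfolding lprod_telescope Xmat_diff
    by (simp add: matrix_scalar_ac scalar_matrix_assoc[symmetric] del: upt_Suc)
  also have "\<dots> = t *\<^sub>R Hfun A E M n t Q"
    unfolding Hfun_def scaleR_sum_right[symmetric]
    by (simp only: matrix_scalar_ac scalar_matrix_assoc[symmetric] trace_scaleR) (simp only: scaleR_conv_of_real)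
  finally show ?thesis .
qed

lemma continuous_on_Xmat[continuous_intros]:
  "continuous_on S f \<Longrightarrow> continuous_on S (\<lambda>x. Xmat (f x) M i)"
  by (cases "odd i") (auto simp: Xmat_def intro!: continuous_intros)

lemma continuous_on_Ucurve[continuous_intros]:
  "continuous_on S f \<Longrightarrow> continuous_on S (\<lambda>x. Ucurve A (f x))"
  unfolding Ucurve_def by (intro continuous_intros) auto

lemma continuous_on_Ccurve[continuous_intros]:
  "continuous_on S f \<Longrightarrow> continuous_on S (\<lambda>x. Ccurve A (f x))"
  unfolding Ccurve_def by (intro continuous_intros) auto

lemma continuous_on_Kmat[continuous_intros]:
  "continuous_on S f \<Longrightarrow> continuous_on S g \<Longrightarrow> continuous_on S (\<lambda>x. Kmat A (f x) (g x) M i)"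
  by (cases "odd i") (auto simp: Kmat_def intro!: continuous_intros)

lemma continuous_Hfun: "continuous_on UNIV (\<lambda>p. Hfun A E M n (fst p) (snd p))"
  unfolding Hfun_def by (intro continuous_intros)

lemma Hfun_0:
  fixes A :: "real^'n^'n"
  assumes At: "transpose A = - A"
  shows "Hfun A E M n 0 Q = 2 * (\<Sum>i\<in>{1..n}. trace (E ** mprod (Xmat Q M) 1 (i-1) **
     (if odd i then cmat A ** Xmat Q M i - Xmat Q M i ** cmat A else 0) ** mprod (Xmat Q M) (i+1) n))"
proof -
  have U0: "Ucurve A 0 = mat 1" by (simp add: Ucurve_def)
  have C0: "Ccurve A 0 = 2 *\<^sub>R cmat A" by (simp add: Ccurve_def cmat_scaleR)
  have tC0: "transpose (cmat A) = - cmat A" unfolding cmat_transpose[symmetric] At by (simp add: cmat_def vec_eq_iff)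
  have K0: "Kmat A 0 Q M i = 2 *\<^sub>R (if odd i then cmat A ** Xmat Q M i - Xmat Q M i ** cmat A else 0)" for i
    by (simp add: Kmat_def C0 transpose_scalar tC0 matrix_scalar_ac scalar_matrix_assoc[symmetric]
        matrix_neg_right scaleR_diff_right)
  have "Hfun A E M n 0 Q = (\<Sum>j<n. trace (E ** (mprod (Xmat Q M) 1 j ** (2 *\<^sub>R
     (if odd (Suc j) then cmat A ** Xmat Q M (Suc j) - Xmat Q M (Suc j) ** cmat A else 0)) ** mprod (Xmat Q M) (Suc j+1) n)))"
    unfolding Hfun_def U0 matrix_mul_lid K0 matrix_sum_ldistrib trace_sum
    by (intro sum.cong refl) (simp add: mprod_lprod del: upt_Suc)
  also have "\<dots> = (\<Sum>j<n. 2 * trace (E ** mprod (Xmat Q M) 1 j **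
     (if odd (Suc j) then cmat A ** Xmat Q M (Suc j) - Xmat Q M (Suc j) ** cmat A else 0) ** mprod (Xmat Q M) (Suc j+1) n))"
    by (intro sum.cong refl) (simp add: matrix_scalar_ac scalar_matrix_assoc[symmetric] trace_scaleR matrix_mul_assoc)
  also have "\<dots> = 2 * (\<Sum>i\<in>{1..n}. trace (E ** mprod (Xmat Q M) 1 (i-1) **
     (if odd i then cmat A ** Xmat Q M i - Xmat Q M i ** cmat A else 0) ** mprod (Xmat Q M) (i+1) n))"
    unfolding sum_distrib_left by (simp add: sum.atLeast1_atMost_eq)
  finally show ?thesis .
qed

lemma infinitesimal:
  fixes A :: "real^'n^'n" and \<mu> :: "(real^'n^'n) measure"
  assumes haar: "haar_orthogonal \<mu>" and At: "transpose A = - A" and A3: "A ** (A ** A) = - A"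
  shows "(\<integral>Q. (\<Sum>i\<in>{1..n}. trace (E ** mprod (Xmat Q M) 1 (i-1) **
     (if odd i then cmat A ** Xmat Q M i - Xmat Q M i ** cmat A else 0) ** mprod (Xmat Q M) (i+1) n)) \<partial>\<mu>) = 0"
proof -
  have "(\<integral>Q. Hfun A E M n 0 Q \<partial>\<mu>) = 0"
  proof (rule key[OF haar])
    show "orthogonal_matrix (Ucurve A t)" for t by (rule orth_Ucurve[OF At A3])
    show "continuous_on UNIV (\<lambda>Q. trace (E ** mprod (Xmat Q M) 1 n))"
      unfolding mprod_lprod by (intro continuous_intros)
    show "continuous_on UNIV (\<lambda>p. Hfun A E M n (fst p) (snd p))" by (rule continuous_Hfun)
    show "trace (E ** mprod (Xmat (Ucurve A t ** Q) M) 1 n) - trace (E ** mprod (Xmat Q M) 1 n)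
    = t *\<^sub>R Hfun A E M n t Q" for t Q by (rule Hfun_eq)
  qed
  then show ?thesis unfolding Hfun_0[OF At] by simp
qed



definition eu :: "'n \<Rightarrow> 'n \<Rightarrow> real^'n^'n" where
  "eu a b = (\<chi> i j. if i = a \<and> j = b then 1 else 0)"
definition ec :: "'n \<Rightarrow> 'n \<Rightarrow> complex^'n^'n" where
  "ec a b = (\<chi> i j. if i = a \<and> j = b then 1 else 0)"

lemma cmat_eu: "cmat (eu a b) = ec a b"
  by (simp add: cmat_def eu_def ec_def vec_eq_iff)

lemma eu_mult: "eu a b ** eu c d = (if b = c then eu a d else 0)"
proof -
  have "(\<Sum>k\<in>UNIV. (if i = a \<and> k = b then 1 else 0) * (if k = c \<and> j = d then 1 else (0::real)))
     = (\<Sum>k\<in>UNIV. if k = b then (if i = a \<and> b = c \<and> j = d then 1 else 0) else 0)" for i j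
    by (intro sum.cong) auto
  then show ?thesis
    unfolding eu_def matrix_matrix_mult_def vec_eq_iff by auto
qed

lemma transpose_eu: "transpose (eu a b) = eu b a"
  by (auto simp: eu_def transpose_def vec_eq_iff)

lemma Aab_t: "transpose (eu a b - eu b a) = - (eu a b - eu b a)"
  by (simp add: transpose_diff transpose_eu)

lemma Aab_3: "(eu a b - eu b a) ** ((eu a b - eu b a) ** (eu a b - eu b a)) = - (eu a b - eu b a)"
proof (cases "a = b")
  case True then show ?thesis by simp
next
  case False
  then show ?thesis
    by (simp add: matrix_diff_ldistrib matrix_diff_rdistrib eu_mult matrix_neg_right)
qed

lemma if_times0: "(if P then x else 0) * y = (if P then x * y else (0::'a::mult_zero))"
  by simp

lemma ec_right: "X ** ec c d = (\<chi> i j. if j = d then X$i$c else 0)"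
proof -
  have "(\<Sum>k\<in>UNIV. X$i$k * (if k = c \<and> j = d then 1 else 0))
     = (\<Sum>k\<in>UNIV. if k = c then (if j = d then X$i$c else 0) else 0)" for i j
    by (intro sum.cong) auto
  then show ?thesis
    unfolding ec_def matrix_matrix_mult_def vec_eq_iff by auto
qed

lemma trace_ec: "trace (ec b a ** X) = X$a$b"
proof -
  have "(\<Sum>k\<in>UNIV. (if i = b \<and> k = a then 1 else 0) * X$k$i)
     = (\<Sum>k\<in>UNIV. if k = a then (if i = b then X$a$i else 0) else 0)" for i
    by (intro sum.cong) auto
  then show ?thesis
    unfolding ec_def matrix_matrix_mult_def trace_def by simp
qed

lemma L1: "(\<Sum>a\<in>UNIV. \<Sum>b\<in>UNIV. trace (ec b a ** (P ** ec a b ** R))) = trace P * trace R"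
proof -
  have "trace (ec b a ** (P ** ec a b ** R)) = P$a$a * R$b$b" for a b
    unfolding trace_ec ec_right
    by (simp add: matrix_matrix_mult_def if_times0 sum.delta sum.delta')
  then show ?thesis by (simp add: trace_def sum_product)
qed

lemma L2: "(\<Sum>a\<in>UNIV. \<Sum>b\<in>UNIV. trace (ec b a ** (P ** ec b a ** R))) = trace (P ** transpose R)"
proof -
  have "trace (ec b a ** (P ** ec b a ** R)) = P$a$b * R$a$b" for a b
    unfolding trace_ec ec_right
    by (simp add: matrix_matrix_mult_def if_times0 sum.delta sum.delta')
  then show ?thesis by (simp add: trace_def matrix_matrix_mult_def transpose_def)
qed

lemma sum_ab:
  "(\<Sum>a\<in>UNIV. \<Sum>b\<in>UNIV. trace (ec b a ** P ** (cmat (eu a b - eu b a) ** Y - Y ** cmat (eu a b - eu b a)) ** R))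
   = trace P * trace (Y ** R) - trace (P ** transpose (Y ** R)) - trace (P ** Y) * trace R + trace (P ** Y ** transpose R)"
proof -
  have "trace (ec b a ** P ** (cmat (eu a b - eu b a) ** Y - Y ** cmat (eu a b - eu b a)) ** R)
    = trace (ec b a ** (P ** ec a b ** (Y ** R))) - trace (ec b a ** (P ** ec b a ** (Y ** R)))
      - trace (ec b a ** ((P ** Y) ** ec a b ** R)) + trace (ec b a ** ((P ** Y) ** ec b a ** R))" for a b
    by (simp add: cmat_diff cmat_eu matrix_diff_ldistrib matrix_diff_rdistrib trace_sub trace_add matrix_mul_assoc)
  then show ?thesis
    by (simp add: sum.distrib sum_subtractf L1 L2)
qed



lemma continuous_on_if_const[continuous_intros]:
  "continuous_on S f \<Longrightarrow> continuous_on S g \<Longrightarrow> continuous_on S (\<lambda>x. if c then f x else g x)"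
  by (cases c) auto

lemma mprod_Cons: "a \<le> b \<Longrightarrow> mprod Y a b = Y a ** mprod Y (Suc a) b"
  by (simp add: mprod_lprod upt_conv_Cons del: upt_Suc)

lemma mprod_snoc: "a \<le> Suc b \<Longrightarrow> mprod Y a (Suc b) = mprod Y a b ** Y (Suc b)"
  by (simp add: mprod_lprod lprod_append del: upt_Suc) (simp add: upt_Suc_append lprod_append)

lemma swap3: "(\<Sum>a\<in>A. \<Sum>b\<in>B. \<Sum>i\<in>C. f a b i) = (\<Sum>i\<in>C. \<Sum>a\<in>A. \<Sum>b\<in>B. f a b i)"
proof -
  have "(\<Sum>a\<in>A. \<Sum>b\<in>B. \<Sum>i\<in>C. f a b i) = (\<Sum>a\<in>A. \<Sum>i\<in>C. \<Sum>b\<in>B. f a b i)"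
    by (rule sum.cong[OF refl], rule sum.swap)
  also have "\<dots> = (\<Sum>i\<in>C. \<Sum>a\<in>A. \<Sum>b\<in>B. f a b i)" by (rule sum.swap)
  finally show ?thesis .
qed

lemma T_eq:
  assumes "1 \<le> i" "i \<le> n"
  shows "trace (mprod Y 1 (i-1)) * trace (Y i ** mprod Y (i+1) n) - trace (mprod Y 1 (i-1) ** transpose (Y i ** mprod Y (i+1) n))
     - trace (mprod Y 1 (i-1) ** Y i) * trace (mprod Y (i+1) n) + trace (mprod Y 1 (i-1) ** Y i ** transpose (mprod Y (i+1) n))
   = (trace (mprod Y 1 (i-1)) * trace (mprod Y i n) - trace (mprod Y 1 (i-1) ** transpose (mprod Y i n)))
     - (trace (mprod Y 1 i) * trace (mprod Y (i+1) n) - trace (mprod Y 1 i ** transpose (mprod Y (i+1) n)))"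
proof -
  have 1: "Y i ** mprod Y (i+1) n = mprod Y i n" using mprod_Cons[of i n Y] assms by simp
  have 2: "mprod Y 1 (i-1) ** Y i = mprod Y 1 i" using mprod_snoc[of 1 "i-1" Y] assms by simp
  show ?thesis unfolding 1 2 by simp
qed

lemma pointwise:
  fixes Q :: "real^'n^'n" and M :: "nat \<Rightarrow> complex^'n^'n"
  assumes "even n" "n \<ge> 2"
  shows "(\<Sum>a\<in>UNIV. \<Sum>b\<in>UNIV. \<Sum>i\<in>{1..n}. trace (ec b a ** mprod (Xmat Q M) 1 (i-1) **
     (if odd i then cmat (eu a b - eu b a) ** Xmat Q M i - Xmat Q M i ** cmat (eu a b - eu b a) else 0)
     ** mprod (Xmat Q M) (i+1) n))
   = (of_nat CARD('n) - 1) * trace (mprod (Xmat Q M) 1 n)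
     + (\<Sum>k\<in>{k. 3 \<le> k \<and> k \<le> n - 1 \<and> odd k}.
          trace (mprod (Xmat Q M) 1 (k-1)) * trace (mprod (Xmat Q M) k n)
        - trace (mprod (Xmat Q M) 1 (k-1) ** transpose (mprod (Xmat Q M) k n)))
     - (\<Sum>k\<in>{k. 1 \<le> k \<and> k \<le> n - 1 \<and> odd k}.
          trace (mprod (Xmat Q M) 1 k) * trace (mprod (Xmat Q M) (k+1) n)
        - trace (mprod (Xmat Q M) 1 k ** transpose (mprod (Xmat Q M) (k+1) n)))"
proof -
  let ?Y = "Xmat Q M"
  define a' where "a' k = trace (mprod ?Y 1 (k-1)) * trace (mprod ?Y k n) - trace (mprod ?Y 1 (k-1) ** transpose (mprod ?Y k n))" for k
  define b' where "b' k = trace (mprod ?Y 1 k) * trace (mprod ?Y (k+1) n) - trace (mprod ?Y 1 k ** transpose (mprod ?Y (k+1) n))" for k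
  let ?S1 = "{k. 1 \<le> k \<and> k \<le> n - 1 \<and> odd k}" and ?S3 = "{k. 3 \<le> k \<and> k \<le> n - 1 \<and> odd k}"
  have inner: "(\<Sum>a\<in>UNIV. \<Sum>b\<in>UNIV. trace (ec b a ** mprod ?Y 1 (i-1) **
     (if odd i then cmat (eu a b - eu b a) ** ?Y i - ?Y i ** cmat (eu a b - eu b a) else 0)
     ** mprod ?Y (i+1) n)) = (if odd i then a' i - b' i else 0)" if i: "i \<in> {1..n}" for i
  proof (cases "odd i")
    case True
    let ?P = "mprod ?Y 1 (i-1)" and ?R = "mprod ?Y (i+1) n"
    have "(\<Sum>a\<in>UNIV. \<Sum>b\<in>UNIV. trace (ec b a ** ?P **
     (if odd i then cmat (eu a b - eu b a) ** ?Y i - ?Y i ** cmat (eu a b - eu b a) else 0) ** ?R))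
     = (\<Sum>a\<in>UNIV. \<Sum>b\<in>UNIV. trace (ec b a ** ?P **
     (cmat (eu a b - eu b a) ** ?Y i - ?Y i ** cmat (eu a b - eu b a)) ** ?R))"
      using True by simp
    also have "\<dots> = trace ?P * trace (?Y i ** ?R) - trace (?P ** transpose (?Y i ** ?R))
       - trace (?P ** ?Y i) * trace ?R + trace (?P ** ?Y i ** transpose ?R)"
      by (rule sum_ab)
    also have "\<dots> = a' i - b' i"
      unfolding a'_def b'_def using i by (intro T_eq) auto
    finally show ?thesis using True by simp
  next
    case False
    then show ?thesis by (simp add: trace_0[simplified])
  qed
  have "(\<Sum>a\<in>UNIV. \<Sum>b\<in>UNIV. \<Sum>i\<in>{1..n}. trace (ec b a ** mprod ?Y 1 (i-1) **
     (if odd i then cmat (eu a b - eu b a) ** ?Y i - ?Y i ** cmat (eu a b - eu b a) else 0)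
     ** mprod ?Y (i+1) n))
    = (\<Sum>i\<in>{1..n}. \<Sum>a\<in>UNIV. \<Sum>b\<in>UNIV. trace (ec b a ** mprod ?Y 1 (i-1) **
     (if odd i then cmat (eu a b - eu b a) ** ?Y i - ?Y i ** cmat (eu a b - eu b a) else 0)
     ** mprod ?Y (i+1) n))"
    by (rule swap3)
  also have "\<dots> = (\<Sum>i\<in>{1..n}. if odd i then a' i - b' i else 0)"
    by (rule sum.cong[OF refl inner])
  also have "\<dots> = (\<Sum>i\<in>?S1. a' i - b' i)"
  proof -
    have par: "x \<le> n - 1" if "odd x" "x \<le> n" for x
    proof -
      have "x \<noteq> n" using assms(1) that(1) by auto
      with that(2) show ?thesis by linarith
    qed
    have "?S1 = {i\<in>{1..n}. odd i}" using assms par by auto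
    then show ?thesis by (simp only: sum.inter_filter[OF finite_atLeastAtMost])
  qed
  also have "\<dots> = (a' 1 - b' 1) + (\<Sum>i\<in>?S3. a' i - b' i)"
  proof -
    have "?S1 = insert 1 ?S3" using assms by (auto elim: oddE)
    moreover have "1 \<notin> ?S3" by simp
    moreover have "finite ?S3" by simp
    ultimately show ?thesis by simp
  qed
  also have "\<dots> = a' 1 + (\<Sum>i\<in>?S3. a' i) - (\<Sum>i\<in>?S1. b' i)"
  proof -
    have "?S1 = insert 1 ?S3" using assms by (auto elim: oddE)
    moreover have "1 \<notin> ?S3" by simp
    moreover have "finite ?S3" by simp
    ultimately show ?thesis by (simp add: sum_subtractf)
  qed
  also have "a' 1 = (of_nat CARD('n) - 1) * trace (mprod ?Y 1 n)"
  proof -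
    have m10: "mprod ?Y (Suc 0) 0 = mat 1" by (simp add: mprod_def)
    show ?thesis unfolding a'_def by (simp add: m10 trace_I trace_transpose algebra_simps)
  qed
  finally show ?thesis unfolding a'_def b'_def by simp
qed



theorem proposition4p1:
  fixes \<mu> :: "(real^'n^'n) measure" and M :: "nat \<Rightarrow> complex^'n^'n" and n :: nat
  assumes "CARD('n) \<ge> 2"
    and "haar_orthogonal \<mu>"
    and "even n" and "n \<ge> 2"
  shows "(of_nat CARD('n) - 1) * (\<integral>Q. trace (mprod (Xmat Q M) 1 n) \<partial>\<mu>)
    = - (\<Sum>k\<in>{k. 1 \<le> k \<and> k \<le> n - 1 \<and> odd k}.
           \<integral>Q. trace (mprod (Xmat Q M) 1 k ** transpose (mprod (Xmat Q M) (k+1) n)) \<partial>\<mu>)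
      + (\<Sum>k\<in>{k. 1 \<le> k \<and> k \<le> n - 1 \<and> odd k}.
           \<integral>Q. trace (mprod (Xmat Q M) 1 k) * trace (mprod (Xmat Q M) (k+1) n) \<partial>\<mu>)
      + (\<Sum>k\<in>{k. 3 \<le> k \<and> k \<le> n - 1 \<and> odd k}.
           \<integral>Q. trace (mprod (Xmat Q M) 1 (k-1) ** transpose (mprod (Xmat Q M) k n)) \<partial>\<mu>)
      - (\<Sum>k\<in>{k. 3 \<le> k \<and> k \<le> n - 1 \<and> odd k}.
           \<integral>Q. trace (mprod (Xmat Q M) 1 (k-1)) * trace (mprod (Xmat Q M) k n) \<partial>\<mu>)"
proof -
  note haar = assms(2)
  define Sab where "Sab a b Q = (\<Sum>i\<in>{1..n}. trace (ec b a ** mprod (Xmat Q M) 1 (i-1) **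
     (if odd i then cmat (eu a b - eu b a) ** Xmat Q M i - Xmat Q M i ** cmat (eu a b - eu b a) else 0)
     ** mprod (Xmat Q M) (i+1) n))" for a b Q
  have int: "integrable \<mu> f" if "continuous_on UNIV f" for f :: "real^'n^'n \<Rightarrow> complex"
    by (rule cont_integrable[OF haar that])
  have iS: "integrable \<mu> (Sab a b)" for a b
    by (rule int) (unfold Sab_def mprod_lprod, intro continuous_intros)
  have iS2: "integrable \<mu> (\<lambda>Q. \<Sum>b\<in>UNIV. Sab a b Q)" for a
    by (rule int) (unfold Sab_def mprod_lprod, intro continuous_intros)
  have I0: "(\<integral>Q. Sab a b Q \<partial>\<mu>) = 0" for a b
    unfolding Sab_def by (rule infinitesimal[OF haar Aab_t Aab_3])
  have "(\<integral>Q. (\<Sum>a\<in>UNIV. \<Sum>b\<in>UNIV. Sab a b Q) \<partial>\<mu>) = 0"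
    by (simp add: integral_sum iS iS2 I0)
  also have "(\<lambda>Q. \<Sum>a\<in>UNIV. \<Sum>b\<in>UNIV. Sab a b Q) = (\<lambda>Q. (of_nat CARD('n) - 1) * trace (mprod (Xmat Q M) 1 n)
     + (\<Sum>k\<in>{k. 3 \<le> k \<and> k \<le> n - 1 \<and> odd k}.
          trace (mprod (Xmat Q M) 1 (k-1)) * trace (mprod (Xmat Q M) k n)
        - trace (mprod (Xmat Q M) 1 (k-1) ** transpose (mprod (Xmat Q M) k n)))
     - (\<Sum>k\<in>{k. 1 \<le> k \<and> k \<le> n - 1 \<and> odd k}.
          trace (mprod (Xmat Q M) 1 k) * trace (mprod (Xmat Q M) (k+1) n)
        - trace (mprod (Xmat Q M) 1 k ** transpose (mprod (Xmat Q M) (k+1) n))))"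
    unfolding Sab_def by (intro ext pointwise assms)
  finally have eq0: "(\<integral>Q. (of_nat CARD('n) - 1) * trace (mprod (Xmat Q M) 1 n)
     + (\<Sum>k\<in>{k. 3 \<le> k \<and> k \<le> n - 1 \<and> odd k}.
          trace (mprod (Xmat Q M) 1 (k-1)) * trace (mprod (Xmat Q M) k n)
        - trace (mprod (Xmat Q M) 1 (k-1) ** transpose (mprod (Xmat Q M) k n)))
     - (\<Sum>k\<in>{k. 1 \<le> k \<and> k \<le> n - 1 \<and> odd k}.
          trace (mprod (Xmat Q M) 1 k) * trace (mprod (Xmat Q M) (k+1) n)
        - trace (mprod (Xmat Q M) 1 k ** transpose (mprod (Xmat Q M) (k+1) n))) \<partial>\<mu>) = 0" .
  have iF: "integrable \<mu> (\<lambda>Q. trace (mprod (Xmat Q M) a b))" for a b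
    by (rule int) (unfold mprod_lprod, intro continuous_intros)
  have iF1: "integrable \<mu> (\<lambda>Q. trace (mprod (Xmat Q M) a b ** transpose (mprod (Xmat Q M) c d)))" for a b c d
    by (rule int) (unfold mprod_lprod, intro continuous_intros)
  have iF2: "integrable \<mu> (\<lambda>Q. trace (mprod (Xmat Q M) a b) * trace (mprod (Xmat Q M) c d))" for a b c d
    by (rule int) (unfold mprod_lprod, intro continuous_intros)
  from eq0 have "(of_nat CARD('n) - 1) * (\<integral>Q. trace (mprod (Xmat Q M) 1 n) \<partial>\<mu>)
     + (\<Sum>k\<in>{k. 3 \<le> k \<and> k \<le> n - 1 \<and> odd k}.
          (\<integral>Q. trace (mprod (Xmat Q M) 1 (k-1)) * trace (mprod (Xmat Q M) k n) \<partial>\<mu>)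
        - (\<integral>Q. trace (mprod (Xmat Q M) 1 (k-1) ** transpose (mprod (Xmat Q M) k n)) \<partial>\<mu>))
     - (\<Sum>k\<in>{k. 1 \<le> k \<and> k \<le> n - 1 \<and> odd k}.
          (\<integral>Q. trace (mprod (Xmat Q M) 1 k) * trace (mprod (Xmat Q M) (k+1) n) \<partial>\<mu>)
        - (\<integral>Q. trace (mprod (Xmat Q M) 1 k ** transpose (mprod (Xmat Q M) (k+1) n)) \<partial>\<mu>)) = 0"
    by (simp add: iF iF1 iF2 integral_sum integrable_sum)
  then show ?thesis
    by (simp add: sum_subtractf algebra_simps)
qed

end
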